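(* Let $\mathcal{R}=\{z\in\mathbb{C}:\Re(z)>0\}$ and let $\Phi:\mathcal{R}\to\mathbb{C}$ be analytic and satisfy: (a) for all $0<a<b<\infty$, $\lim_{y\to\pm\infty} e^{-\pi|y|}\int_a^b\left|\frac{\Phi(x+iy)}{x+iy}\right|\mathrm{d}x=0$; (b) for every $\eta>0$, $\sup_{x\ge\eta}\int_{-\infty}^\infty\left|\frac{\Phi(x+iy)}{x+iy}\right|e^{-\pi|y|}\,\mathrm{d}y<\infty$; (c) $\lim_{x\to\infty}\int_{-\infty}^\infty\left|\frac{\Phi(x+iy)}{x+iy}\right|e^{-\pi|y|}\,\mathrm{d}y=0$. Let $\beta>0$ with $\beta-\frac12\notin\mathbb{Z}$, and for $z$ with $|\Re(z)|\ne\beta$ define $$I(\beta,\Phi;z)=\frac{1}{2\pi i}\int_{\beta-i\infty}^{\beta+i\infty}\left(\frac{\cos\pi z}{\cos\pi w}\right)\left(\frac{2w}{z^2-w^2}\right)\Phi(w)\,\mathrm{d}w,$$ and $B(\beta,\Phi)=\frac{2}{\pi}\int_{-\infty}^{\infty}\left|\frac{\Phi(\beta+iv)}{\beta+iv}\right|e^{-\pi|v|}\,\mathrm{d}v$. Then for every $z=x+iy$ with $|x|\ne\beta$, $$|I(\beta,\Phi;z)|\le B(\beta,\Phi)\,|\sec\pi\beta|\left(1+\frac{|z|}{\bigl||x|-\beta\bigr|}\right)e^{\pi|y|}.$$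
   Context: Under the hypotheses the integrand defining $I(\beta,\Phi;z)$ is integrable along the line $\Re(w)=\beta$. *)

theory Defs
  imports "HOL-Analysis.Analysis"
begin

definition right_half_plane :: "complex set" where
  "right_half_plane = {z. Re z > 0}"

text \<open>I(beta, Phi; z) = 1/(2 pi i) times the integral over the vertical line Re w = beta,
  parametrised as w = beta + i t, dw = i dt, t ranging over the reals (Lebesgue measure).\<close>
definition I_int :: "real \<Rightarrow> (complex \<Rightarrow> complex) \<Rightarrow> complex \<Rightarrow> complex" where
  "I_int \<beta> \<Phi> z =
     1 / (2 * of_real pi * \<i>) *
     (LINT t|lborel.
        (let w = Complex \<beta> t in
           (cos (of_real pi * z) / cos (of_real pi * w)) * (2 * w / (z\<^sup>2 - w\<^sup>2)) * \<Phi> w * \<i>))"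

definition B_const :: "real \<Rightarrow> (complex \<Rightarrow> complex) \<Rightarrow> real" where
  "B_const \<beta> \<Phi> =
     2 / pi * (LINT v|lborel. cmod (\<Phi> (Complex \<beta> v) / Complex \<beta> v) * exp (- pi * \<bar>v\<bar>))"

end

theory Submission
  imports Defs
begin

lemma cos_lower:
  fixes b t :: real
  shows "\<bar>cos (pi*b)\<bar> * exp (pi*\<bar>t\<bar>) / 2 \<le> cmod (cos (of_real pi * Complex b t))"
proof -
  define a where "a = pi * t"
  define u where "u = exp a"
  have u0: "u > 0" by (simp add: u_def)
  have Re: "Re (of_real pi * Complex b t) = pi * b" and Im: "Im (of_real pi * Complex b t) = a"
    by (simp_all add: a_def)
  have sq: "cmod (cos (of_real pi * Complex b t)) ^ 2 = cos (pi*b) ^ 2 + (u - inverse u)^2 / 4"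
    using norm_cos_squared[of "of_real pi * Complex b t"] by (simp add: Re Im u_def a_def)
  have ea: "exp (pi*\<bar>t\<bar>) = max u (inverse u)"
  proof (cases "t < 0")
    case True
    hence "a \<le> 0" by (simp add: a_def mult_nonneg_nonpos)
    hence "u \<le> inverse u" by (simp add: u_def exp_minus[symmetric])
    thus ?thesis using True by (simp add: u_def a_def exp_minus[symmetric] max_def)
  next
    case False
    hence "a \<ge> 0" by (simp add: a_def)
    hence "inverse u \<le> u" by (simp add: u_def exp_minus[symmetric])
    thus ?thesis using False by (simp add: u_def a_def max_def)
  qed
  have key: "(max u (inverse u))^2 / 4 \<le> 1 + (u - inverse u)^2 / 4"
  proof -
    have "(max u (inverse u))^2 \<le> (u + inverse u)^2"
      using u0 by (auto simp: max_def intro!: power_mono)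
    moreover have "(u + inverse u)^2 = 4 + (u - inverse u)^2"
      using u0 by (simp add: power2_eq_square field_simps)
    ultimately show ?thesis by simp
  qed
  have c1: "cos (pi*b)^2 \<le> 1" by (simp add: abs_square_le_1)  
  have "(\<bar>cos (pi*b)\<bar> * exp (pi*\<bar>t\<bar>) / 2)^2 = cos (pi*b)^2 * ((max u (inverse u))^2 / 4)"
    by (simp add: ea power_mult_distrib power_divide)
  also have "\<dots> \<le> cos (pi*b)^2 * (1 + (u - inverse u)^2 / 4)"
    using key by (intro mult_left_mono) auto
  also have "\<dots> \<le> cos (pi*b) ^ 2 + (u - inverse u)^2 / 4"
  proof -
    have "cos (pi*b)^2 * ((u - inverse u)^2 / 4) \<le> 1 * ((u - inverse u)^2 / 4)"
      using c1 by (intro mult_right_mono) auto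
    then show ?thesis by (simp add: algebra_simps)
  qed
  finally show ?thesis using sq
    by (metis norm_ge_zero power2_le_imp_le)
qed

lemma rat_bound:
  fixes z w :: complex and d :: real
  assumes d: "d > 0" "d \<le> \<bar>Re z - Re w\<bar>" "d \<le> \<bar>Re z + Re w\<bar>"
  shows "cmod (2 * w * w / (z\<^sup>2 - w\<^sup>2)) \<le> 2 * (1 + cmod z / d)"
proof -
  have n1: "cmod (z - w) \<ge> d" using d abs_Re_le_cmod[of "z - w"] by simp
  have n2: "cmod (z + w) \<ge> d" using d abs_Re_le_cmod[of "z + w"] by simp
  have nz1: "z - w \<noteq> 0" and nz2: "z + w \<noteq> 0" using n1 n2 d by auto
  have "z\<^sup>2 - w\<^sup>2 = (z - w) * (z + w)" by (simp add: power2_eq_square algebra_simps)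
  hence id: "2 * w * w / (z\<^sup>2 - w\<^sup>2) = -2 + z/(z-w) + z/(z+w)"
    using nz1 nz2 by (simp add: field_simps)
  have "cmod (-2 + z/(z-w) + z/(z+w)) \<le> 2 + cmod z / cmod (z-w) + cmod z / cmod (z+w)"
    by (metis (no_types, opaque_lifting) norm_divide norm_minus_cancel norm_numeral norm_triangle_le add_mono order_refl norm_triangle_ineq)
  also have "cmod z / cmod (z-w) \<le> cmod z / d" using n1 d by (intro divide_left_mono) (auto intro!: mult_pos_pos)
  also have "cmod z / cmod (z+w) \<le> cmod z / d" using n2 d by (intro divide_left_mono) (auto intro!: mult_pos_pos)
  finally show ?thesis using id by simp
qed
theorem lemma3p2:
  fixes \<Phi> :: "complex \<Rightarrow> complex" and \<beta> :: real and z :: complex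
  assumes analytic: "\<Phi> analytic_on right_half_plane"
    and cond_a: "\<And>a b. 0 < a \<Longrightarrow> a < b \<Longrightarrow>
        ((\<lambda>y. exp (- pi * \<bar>y\<bar>) * (LBINT x:{a..b}. cmod (\<Phi> (Complex x y) / Complex x y)))
           \<longlongrightarrow> 0) at_top \<and>
        ((\<lambda>y. exp (- pi * \<bar>y\<bar>) * (LBINT x:{a..b}. cmod (\<Phi> (Complex x y) / Complex x y)))
           \<longlongrightarrow> 0) at_bot"
    and cond_b: "\<And>\<eta>. 0 < \<eta> \<Longrightarrow>
        (SUP x\<in>{\<eta>..}. \<integral>\<^sup>+ y. ennreal (cmod (\<Phi> (Complex x y) / Complex x y) * exp (- pi * \<bar>y\<bar>)) \<partial>lborel) < \<infinity>"
    and cond_c: "((\<lambda>x. \<integral>\<^sup>+ y. ennreal (cmod (\<Phi> (Complex x y) / Complex x y) * exp (- pi * \<bar>y\<bar>)) \<partial>lborel)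
           \<longlongrightarrow> 0) at_top"
    and beta_pos: "\<beta> > 0"
    and beta_half: "\<beta> - 1/2 \<notin> \<int>"
    and z_off: "\<bar>Re z\<bar> \<noteq> \<beta>"
  shows "cmod (I_int \<beta> \<Phi> z) \<le>
           B_const \<beta> \<Phi> * \<bar>1 / cos (pi * \<beta>)\<bar> *
           (1 + cmod z / \<bar>\<bar>Re z\<bar> - \<beta>\<bar>) * exp (pi * \<bar>Im z\<bar>)"
proof -
  define w where "w = (\<lambda>t. Complex \<beta> t)"
  define f where "f = (\<lambda>t. (let w = Complex \<beta> t in
           (cos (of_real pi * z) / cos (of_real pi * w)) * (2 * w / (z\<^sup>2 - w\<^sup>2)) * \<Phi> w * \<i>))"
  define h where "h = (\<lambda>t. cmod (\<Phi> (Complex \<beta> t) / Complex \<beta> t) * exp (- pi * \<bar>t\<bar>))"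
  define d where "d = \<bar>\<bar>Re z\<bar> - \<beta>\<bar>"
  define S where "S = \<bar>1 / cos (pi * \<beta>)\<bar>"
  define A where "A = 1 + cmod z / d"
  define E where "E = exp (pi * \<bar>Im z\<bar>)"
  define K where "K = 4 * S * A * E"
  have d0: "d > 0" using z_off by (simp add: d_def)
  have c0: "cos (pi * \<beta>) \<noteq> 0"
  proof
    assume "cos (pi * \<beta>) = 0"
    then obtain n where n: "pi * \<beta> = real_of_int n * pi + pi/2" using cos_zero_iff_int2 by blast
    hence "pi * \<beta> = pi * (real_of_int n + 1/2)" by (simp add: algebra_simps)
    hence "\<beta> = real_of_int n + 1/2" using pi_gt_zero by (metis mult_cancel_left less_irrefl)
    hence "\<beta> - 1/2 \<in> \<int>" by simp
    with beta_half show False by simp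
  qed
  have S0: "S \<ge> 0" "A \<ge> 0" "E \<ge> 0" using d0 by (auto simp: S_def A_def E_def)
  have hnn: "h t \<ge> 0" for t by (simp add: h_def)
  have cont: "continuous_on UNIV h"
  proof -
    have c1: "continuous_on UNIV (\<lambda>t. Complex \<beta> t)"
      unfolding Complex_eq by (intro continuous_intros)
    have c2: "continuous_on right_half_plane \<Phi>"
      using analytic analytic_imp_holomorphic holomorphic_on_imp_continuous_on by blast
    have c3: "continuous_on UNIV (\<lambda>t. \<Phi> (Complex \<beta> t))"
      by (rule continuous_on_compose2[OF c2 c1]) (auto simp: right_half_plane_def beta_pos)
    show ?thesis unfolding h_def
      by (intro continuous_intros c3 c1) (use beta_pos in \<open>auto simp: complex_eq_iff\<close>)
  qed
  have hint: "integrable lborel h"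
  proof (subst integrable_iff_bounded, intro conjI)
    show "h \<in> borel_measurable lborel" using borel_measurable_continuous_onI[OF cont] by simp
    have "(\<integral>\<^sup>+ y. ennreal (norm (h y)) \<partial>lborel) =
      (\<integral>\<^sup>+ y. ennreal (cmod (\<Phi> (Complex \<beta> y) / Complex \<beta> y) * exp (- pi * \<bar>y\<bar>)) \<partial>lborel)"
      by (simp add: h_def)
    also have "\<dots> \<le> (SUP x\<in>{\<beta>..}. \<integral>\<^sup>+ y. ennreal (cmod (\<Phi> (Complex x y) / Complex x y) * exp (- pi * \<bar>y\<bar>)) \<partial>lborel)"
      by (rule SUP_upper) auto
    also have "\<dots> < \<infinity>" using cond_b beta_pos by blast
    finally show "(\<integral>\<^sup>+ y. ennreal (norm (h y)) \<partial>lborel) < \<infinity>" .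
  qed
  have pw: "cmod (f t) \<le> K * h t" for t
  proof -
    let ?w = "Complex \<beta> t"
    have w0: "?w \<noteq> 0" using beta_pos by (simp add: complex_eq_iff)
    have cz: "cmod (cos (of_real pi * z)) \<le> E"
      using cmod_cos_le_exp[of 1 "of_real pi * z"] by (simp add: E_def abs_mult)
    have cl: "\<bar>cos (pi*\<beta>)\<bar> * exp (pi*\<bar>t\<bar>) / 2 \<le> cmod (cos (of_real pi * ?w))"
      by (rule cos_lower)
    have pos: "\<bar>cos (pi*\<beta>)\<bar> * exp (pi*\<bar>t\<bar>) / 2 > 0" using c0 by simp
    have icw: "1 / cmod (cos (of_real pi * ?w)) \<le> 2 * S * exp (- pi * \<bar>t\<bar>)"
    proof -
      have "1 / cmod (cos (of_real pi * ?w)) \<le> 1 / (\<bar>cos (pi*\<beta>)\<bar> * exp (pi*\<bar>t\<bar>) / 2)"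
        using cl pos by (intro divide_left_mono) (auto intro!: mult_pos_pos)
      also have "\<dots> = 2 * S * exp (- pi * \<bar>t\<bar>)"
        by (simp add: S_def exp_minus field_simps abs_divide)
      finally show ?thesis .
    qed
    have rb: "cmod (2 * ?w * ?w / (z\<^sup>2 - ?w\<^sup>2)) \<le> 2 * A"
      unfolding A_def
      by (rule rat_bound[OF d0]) (use beta_pos in \<open>auto simp: d_def abs_if\<close>)
    have "cmod (f t) = cmod (cos (of_real pi * z)) * (1 / cmod (cos (of_real pi * ?w))) *
          cmod (2 * ?w * ?w / (z\<^sup>2 - ?w\<^sup>2)) * cmod (\<Phi> ?w / ?w)"
      using w0 by (simp add: f_def Let_def norm_mult norm_divide)
    also have "\<dots> \<le> E * (2 * S * exp (- pi * \<bar>t\<bar>)) * (2 * A) * cmod (\<Phi> ?w / ?w)"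
      by (intro mult_mono cz icw rb) (auto simp: S0)
    also have "\<dots> = K * h t" by (simp add: K_def h_def)
    finally show ?thesis .
  qed
  have nb: "cmod (LINT t|lborel. f t) \<le> K * (LINT t|lborel. h t)"
  proof (cases "integrable lborel f")
    case True
    have "cmod (LINT t|lborel. f t) \<le> (LINT t|lborel. K * h t)"
      by (rule Bochner_Integration.integral_norm_bound_integral[OF True]) (use hint pw in auto)
    also have "\<dots> = K * (LINT t|lborel. h t)" by simp
    finally show ?thesis .
  next
    case False
    hence "(LINT t|lborel. f t) = 0" by (rule not_integrable_integral_eq)
    moreover have "(LINT t|lborel. h t) \<ge> 0" using hnn by (intro integral_nonneg_AE) auto
    ultimately show ?thesis using S0 by (simp add: K_def)
  qed
  have "cmod (I_int \<beta> \<Phi> z) = cmod (LINT t|lborel. f t) / (2 * pi)"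
    by (simp add: I_int_def f_def norm_mult norm_divide)
  also have "\<dots> \<le> K * (LINT t|lborel. h t) / (2 * pi)"
    using nb by (intro divide_right_mono) auto
  also have "\<dots> = B_const \<beta> \<Phi> * S * A * E"
    by (simp add: K_def B_const_def h_def)
  finally show ?thesis by (simp add: S_def A_def E_def d_def)
qed

end
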